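(* Let $M$ be a connected complex manifold and $\sigma : M\to M$ a biholomorphic map, inducing the automorphism $\widetilde{\sigma}(f) = f\circ\sigma^{-1}$ of $C(M)$. If $A\subseteq H(M)$ is a subalgebra of the algebra of holomorphic functions on $M$ that separates the points of $M$ and is invariant under $\widetilde{\sigma}$ and its inverse, then $A$ is maximal abelian in $A\rtimes_{\widetilde{\sigma}}\mathbb{Z}$ if and only if $\sigma$ is not of finite order.
   Context: $\sigma$ is of finite order if $\sigma^n = \mathrm{id}_M$ for some non-zero integer $n$. The crossed product $A \rtimes_{\widetilde{\sigma}} \mathbb{Z}$ is the set of finitely supported functions $\mathbb{Z}\to A$, written $\sum_n f_n\delta^n$, with pointwise linear operations and multiplication determined by $(f_n\delta^n)*(g_m\delta^m)=f_n\,\widetilde{\sigma}^n(g_m)\,\delta^{n+m}$; $A$ is embedded as $\{f_0\delta^0\}$. *)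

theory Defs
  imports "HOL-Analysis.Analysis"
begin

definition cscale :: "complex \<Rightarrow> complex^'n \<Rightarrow> complex^'n" where
  "cscale c v = (\<chi> i. c * v $ i)"

definition cholo_on :: "(complex^'n) set \<Rightarrow> (complex^'n \<Rightarrow> complex) \<Rightarrow> bool" where
  "cholo_on S f \<longleftrightarrow> (\<forall>x\<in>S. \<exists>f'. (f has_derivative f') (at x) \<and>
      (\<forall>c v. f' (cscale c v) = c * f' v))"

definition cholo_vec_on :: "(complex^'n) set \<Rightarrow> (complex^'n \<Rightarrow> complex^'m) \<Rightarrow> bool" where
  "cholo_vec_on S f \<longleftrightarrow> (\<forall>j. cholo_on S (\<lambda>x. f x $ j))"

section \<open>Complex manifolds (the manifold is the whole type 'a with its topology)\<close>

type_synonym ('a, 'n) chart = "'a set \<times> ('a \<Rightarrow> complex^'n)"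

definition is_chart :: "('a::topological_space, 'n::finite) chart \<Rightarrow> bool" where
  "is_chart c \<longleftrightarrow> (case c of (U, \<phi>) \<Rightarrow>
     open U \<and> open (\<phi> ` U) \<and> (\<exists>\<psi>. homeomorphism U (\<phi> ` U) \<phi> \<psi>))"

definition holo_atlas :: "('a::topological_space, 'n::finite) chart set \<Rightarrow> bool" where
  "holo_atlas At \<longleftrightarrow>
     (\<forall>c\<in>At. is_chart c) \<and>
     (\<Union>c\<in>At. fst c) = UNIV \<and>
     (\<forall>(U, \<phi>)\<in>At. \<forall>(V, \<psi>)\<in>At.
        cholo_vec_on (\<phi> ` (U \<inter> V)) (\<psi> \<circ> inv_into U \<phi>))"

definition connected_complex_manifold :: "('a::{t2_space, second_countable_topology}, 'n::finite) chart set \<Rightarrow> bool" where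
  "connected_complex_manifold At \<longleftrightarrow> holo_atlas At \<and> connected (UNIV :: 'a set)"

definition holo_fun :: "('a::topological_space, 'n::finite) chart set \<Rightarrow> ('a \<Rightarrow> complex) \<Rightarrow> bool" where
  "holo_fun At f \<longleftrightarrow> (\<forall>(U, \<phi>)\<in>At. cholo_on (\<phi> ` U) (f \<circ> inv_into U \<phi>))"

definition holo_map :: "('a::topological_space, 'n::finite) chart set \<Rightarrow> ('a \<Rightarrow> 'a) \<Rightarrow> bool" where
  "holo_map At g \<longleftrightarrow> continuous_on UNIV g \<and>
     (\<forall>(U, \<phi>)\<in>At. \<forall>(V, \<psi>)\<in>At.
        cholo_vec_on (\<phi> ` (U \<inter> g -` V)) (\<psi> \<circ> g \<circ> inv_into U \<phi>))"

definition biholomorphic :: "('a::topological_space, 'n::finite) chart set \<Rightarrow> ('a \<Rightarrow> 'a) \<Rightarrow> bool" where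
  "biholomorphic At g \<longleftrightarrow> bij g \<and> holo_map At g \<and> holo_map At (inv g)"

definition fun_ipow :: "('a \<Rightarrow> 'a) \<Rightarrow> int \<Rightarrow> 'a \<Rightarrow> 'a" where
  "fun_ipow s n = (if 0 \<le> n then s ^^ nat n else (inv s) ^^ nat (- n))"

definition finite_order :: "('a \<Rightarrow> 'a) \<Rightarrow> bool" where
  "finite_order s \<longleftrightarrow> (\<exists>n::int. n \<noteq> 0 \<and> fun_ipow s n = id)"

definition sig_tilde :: "('a \<Rightarrow> 'a) \<Rightarrow> ('a \<Rightarrow> complex) \<Rightarrow> ('a \<Rightarrow> complex)" where
  "sig_tilde s f = f \<circ> inv s"

definition sig_tilde_pow :: "('a \<Rightarrow> 'a) \<Rightarrow> int \<Rightarrow> ('a \<Rightarrow> complex) \<Rightarrow> ('a \<Rightarrow> complex)" where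
  "sig_tilde_pow s n f = f \<circ> fun_ipow s (- n)"

definition fun_subalgebra :: "('a \<Rightarrow> complex) set \<Rightarrow> bool" where
  "fun_subalgebra A \<longleftrightarrow> (\<lambda>x. 0) \<in> A \<and> (\<forall>f\<in>A. \<forall>g\<in>A. (\<lambda>x. f x + g x) \<in> A \<and> (\<lambda>x. f x * g x) \<in> A) \<and>
     (\<forall>c. \<forall>f\<in>A. (\<lambda>x. c * f x) \<in> A)"

definition separates_points :: "('a \<Rightarrow> complex) set \<Rightarrow> bool" where
  "separates_points A \<longleftrightarrow> (\<forall>x y. x \<noteq> y \<longrightarrow> (\<exists>f\<in>A. f x \<noteq> f y))"

text \<open>Elements: finitely supported functions Z -> A, sum_n F n delta^n.\<close>
definition crossed_product :: "('a \<Rightarrow> complex) set \<Rightarrow> (int \<Rightarrow> 'a \<Rightarrow> complex) set" where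
  "crossed_product A = {F. finite {n. F n \<noteq> (\<lambda>x. 0)} \<and> (\<forall>n. F n \<in> A)}"

text \<open>(f_n delta^n) * (g_m delta^m) = f_n sigma~^n(g_m) delta^(n+m), extended bilinearly.\<close>
definition cp_mult :: "('a \<Rightarrow> 'a) \<Rightarrow> (int \<Rightarrow> 'a \<Rightarrow> complex) \<Rightarrow> (int \<Rightarrow> 'a \<Rightarrow> complex) \<Rightarrow> (int \<Rightarrow> 'a \<Rightarrow> complex)" where
  "cp_mult s F G = (\<lambda>k x. \<Sum>n\<in>{n. F n \<noteq> (\<lambda>x. 0)}. F n x * sig_tilde_pow s n (G (k - n)) x)"

definition cp_embed :: "('a \<Rightarrow> complex) \<Rightarrow> (int \<Rightarrow> 'a \<Rightarrow> complex)" where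
  "cp_embed f = (\<lambda>n. if n = 0 then f else (\<lambda>x. 0))"

definition cp_subalgebra :: "('a \<Rightarrow> 'a) \<Rightarrow> ('a \<Rightarrow> complex) set \<Rightarrow> (int \<Rightarrow> 'a \<Rightarrow> complex) set \<Rightarrow> bool" where
  "cp_subalgebra s A B \<longleftrightarrow> B \<subseteq> crossed_product A \<and> (\<lambda>n x. 0) \<in> B \<and>
     (\<forall>F\<in>B. \<forall>G\<in>B. (\<lambda>n x. F n x + G n x) \<in> B \<and> cp_mult s F G \<in> B) \<and>
     (\<forall>c. \<forall>F\<in>B. (\<lambda>n x. c * F n x) \<in> B)"

definition cp_commutative :: "('a \<Rightarrow> 'a) \<Rightarrow> (int \<Rightarrow> 'a \<Rightarrow> complex) set \<Rightarrow> bool" where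
  "cp_commutative s B \<longleftrightarrow> (\<forall>F\<in>B. \<forall>G\<in>B. cp_mult s F G = cp_mult s G F)"

definition maximal_abelian :: "('a \<Rightarrow> 'a) \<Rightarrow> ('a \<Rightarrow> complex) set \<Rightarrow> bool" where
  "maximal_abelian s A \<longleftrightarrow> cp_commutative s (cp_embed ` A) \<and>
     (\<forall>B. cp_subalgebra s A B \<and> cp_commutative s B \<and> cp_embed ` A \<subseteq> B \<longrightarrow> B = cp_embed ` A)"

end

theory Submission
  imports Defs "HOL-Complex_Analysis.Complex_Analysis"
begin

lemma linear_cscale: "linear (\<lambda>t::complex. cscale t w)"
  by (rule linearI) (auto simp: cscale_def vec_eq_iff distrib_right)

lemma line_deriv: "((\<lambda>t::complex. z + cscale t w) has_derivative (\<lambda>h. cscale h w)) (at t)"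
proof -
  have "bounded_linear (\<lambda>t::complex. cscale t w)"
    using linear_cscale linear_conv_bounded_linear by blast
  hence "((\<lambda>t::complex. cscale t w) has_derivative (\<lambda>h. cscale h w)) (at t)"
    by (rule bounded_linear_imp_has_derivative)
  thus ?thesis by (intro derivative_eq_intros) auto
qed

lemma ident_local:
  fixes f :: "complex^'n \<Rightarrow> complex"
  assumes ch: "cholo_on D f" and sub: "ball x0 r \<subseteq> D"
    and W: "open W" "W \<noteq> {}" "W \<subseteq> ball x0 r" and z0: "\<forall>x\<in>W. f x = 0"
    and y: "y \<in> ball x0 r"
  shows "f y = 0"
proof -
  obtain z where z: "z \<in> W" using W by auto
  define w where "w = y - z"
  define L where "L = (\<lambda>t::complex. z + cscale t w)"
  define S where "S = (\<lambda>t::complex. cscale t w) -` ball (x0 - z) r"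
  have S_eq: "S = {t. L t \<in> ball x0 r}"
    by (auto simp: S_def L_def dist_norm algebra_simps)
  have contL: "continuous_on UNIV L"
    unfolding L_def
    by (intro continuous_at_imp_continuous_on ballI) (rule has_derivative_continuous[OF line_deriv])
  have "open S" unfolding S_eq
    using contL by (metis open_ball open_vimage vimage_def)
  have "convex S" unfolding S_def by (rule convex_linear_vimage[OF linear_cscale convex_ball])
  hence "connected S" by (rule convex_connected)
  define T where "T = {t. L t \<in> W}"
  have "open T" unfolding T_def using contL W(1) by (metis open_vimage vimage_def)
  have L0: "L 0 = z" by (simp add: L_def cscale_def vec_eq_iff)
  have L1: "L 1 = y" by (simp add: L_def cscale_def vec_eq_iff w_def)
  have "0 \<in> T" using z L0 by (simp add: T_def)
  have "T \<subseteq> S" using W(3) by (auto simp: T_def S_eq)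
  have hol: "(f \<circ> L) holomorphic_on S"
    unfolding holomorphic_on_def
  proof
    fix t assume "t \<in> S"
    hence "L t \<in> D" using sub S_eq by auto
    then obtain f' where f': "(f has_derivative f') (at (L t))" "\<forall>c v. f' (cscale c v) = c * f' v"
      using ch unfolding cholo_on_def by blast
    have "((f \<circ> L) has_derivative (f' \<circ> (\<lambda>h. cscale h w))) (at t)"
      unfolding L_def using diff_chain_at[OF line_deriv f'(1)[unfolded L_def]] .
    moreover have "f' \<circ> (\<lambda>h. cscale h w) = (*) (f' w)"
      using f'(2) by (auto simp: fun_eq_iff)
    ultimately have "((f \<circ> L) has_field_derivative (f' w)) (at t)"
      by (simp add: has_field_derivative_def)
    thus "(f \<circ> L) field_differentiable at t within S"
      using field_differentiable_at_within field_differentiable_def by blast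
  qed
  have "1 \<in> S" using y L1 S_eq by auto
  have "(f \<circ> L) 1 = (\<lambda>_. 0) 1"
    by (rule analytic_continuation_open[OF \<open>open T\<close> \<open>open S\<close> _ \<open>connected S\<close> \<open>T \<subseteq> S\<close> hol])
       (use \<open>0 \<in> T\<close> \<open>1 \<in> S\<close> z0 in \<open>auto simp: T_def\<close>)
  thus ?thesis using L1 by simp
qed

lemma ident_manifold:
  fixes At :: "('a::topological_space, 'n::finite) chart set"
  assumes at: "holo_atlas At" and conn: "connected (UNIV::'a set)" and hf: "holo_fun At f"
    and V: "open V" "V \<noteq> {}" "\<forall>x\<in>V. f x = 0"
  shows "f x = 0"
proof -
  define Z where "Z = {p. \<exists>N. open N \<and> p \<in> N \<and> (\<forall>q\<in>N. f q = 0)}"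
  have "open Z" unfolding Z_def by (subst open_subopen) blast
  have Zz: "f q = 0" if "q \<in> Z" for q using that by (auto simp: Z_def)
  have "closure Z \<subseteq> Z"
  proof
    fix p assume p: "p \<in> closure Z"
    have "p \<in> (\<Union>c\<in>At. fst c)" using at by (simp add: holo_atlas_def)
    then obtain U \<phi> where c: "(U, \<phi>) \<in> At" "p \<in> U" by auto
    have ic: "is_chart (U, \<phi>)" using at c by (auto simp: holo_atlas_def)
    then obtain \<psi> where U: "open U" "open (\<phi> ` U)" and hom: "homeomorphism U (\<phi> ` U) \<phi> \<psi>"
      by (auto simp: is_chart_def)
    have ch: "cholo_on (\<phi> ` U) (f \<circ> inv_into U \<phi>)"
      using hf c by (auto simp: holo_fun_def)
    have inj: "inj_on \<phi> U" using hom by (metis homeomorphism_apply1 inj_on_inverseI)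
    obtain r where r: "r > 0" "ball (\<phi> p) r \<subseteq> \<phi> ` U"
      using U(2) c(2) by (meson imageI open_contains_ball)
    define N where "N = \<phi> -` ball (\<phi> p) r \<inter> U"
    have contphi: "continuous_on U \<phi>" using hom by (simp add: homeomorphism_def)
    have "open N" unfolding N_def using continuous_on_open_vimage[OF U(1)] contphi by blast
    have "p \<in> N" using r c by (simp add: N_def)
    have "N \<inter> Z \<noteq> {}" using open_Int_closure_eq_empty[OF \<open>open N\<close>, of Z] p \<open>p \<in> N\<close> by auto
    define W where "W = \<phi> ` (N \<inter> Z)"
    have "openin (top_of_set (\<phi> ` U)) W" unfolding W_def
      by (rule homeomorphism_imp_open_map[OF hom])
         (use \<open>open N\<close> \<open>open Z\<close> in \<open>auto simp: N_def intro!: open_subset\<close>)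
    hence "open W" using U(2) openin_open_trans by blast
    have "W \<noteq> {}" using \<open>N \<inter> Z \<noteq> {}\<close> by (simp add: W_def)
    have "W \<subseteq> ball (\<phi> p) r" by (auto simp: W_def N_def)
    have "\<forall>x\<in>W. (f \<circ> inv_into U \<phi>) x = 0"
      using inj Zz by (auto simp: W_def N_def)
    hence "\<forall>q\<in>N. f q = 0"
      using ident_local[OF ch r(2) \<open>open W\<close> \<open>W \<noteq> {}\<close> \<open>W \<subseteq> ball (\<phi> p) r\<close>] inj
      by (auto simp: N_def) (metis inv_into_f_f)
    thus "p \<in> Z" using \<open>open N\<close> \<open>p \<in> N\<close> by (auto simp: Z_def)
  qed
  hence "closed Z" using closure_subset_eq by blast
  have "V \<subseteq> Z" using V by (auto simp: Z_def)
  hence "Z \<noteq> {}" using V by auto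
  have "Z = UNIV"
    using conn \<open>open Z\<close> \<open>closed Z\<close> \<open>Z \<noteq> {}\<close> connected_clopen[of "UNIV::'a set"] by auto
  thus ?thesis using Zz by auto
qed


abbreviation supp :: "(int \<Rightarrow> 'a \<Rightarrow> complex) \<Rightarrow> int set" where
  "supp F \<equiv> {n. F n \<noteq> (\<lambda>x. 0)}"

lemma A_sum:
  assumes A: "fun_subalgebra A" and fin: "finite S" and h: "\<forall>n\<in>S. h n \<in> A"
  shows "(\<lambda>x. \<Sum>n\<in>S. h n x) \<in> A"
  using fin h
proof (induction S rule: finite_induct)
  case empty then show ?case using A by (simp add: fun_subalgebra_def)
next
  case (insert a S)
  then show ?case using A by (simp add: fun_subalgebra_def)
qed

lemma A_funpow:
  fixes g :: "'a \<Rightarrow> 'a" and n :: nat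
  assumes "\<forall>f\<in>A. f \<circ> g \<in> A" "f \<in> A"
  shows "f \<circ> g ^^ n \<in> A"
proof (induction n)
  case 0 then show ?case using assms by simp
next
  case (Suc n)
  have "(f \<circ> g ^^ n) \<circ> g \<in> A" using Suc assms(1) by blast
  then show ?case by (simp only: funpow_Suc_right o_assoc)
qed

lemma A_ipow:
  assumes "\<forall>f\<in>A. sig_tilde s f \<in> A \<and> f \<circ> s \<in> A" "f \<in> A"
  shows "f \<circ> fun_ipow s j \<in> A"
proof -
  have a: "\<forall>f\<in>A. f \<circ> s \<in> A" and b: "\<forall>f\<in>A. f \<circ> inv s \<in> A"
    using assms(1) by (auto simp: sig_tilde_def)
  show ?thesis unfolding fun_ipow_def
    using A_funpow[OF a assms(2)] A_funpow[OF b assms(2)] by simp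
qed

lemma cont_funpow:
  fixes g :: "'a::topological_space \<Rightarrow> 'a" and n :: nat
  assumes "continuous_on UNIV g" shows "continuous_on UNIV (g ^^ n)"
proof (induction n)
  case 0 then show ?case by (auto intro: continuous_on_id')
next
  case (Suc n)
  then show ?case
    using continuous_on_compose[OF Suc continuous_on_subset[OF assms]] by simp
qed

lemma fun_ipow_0[simp]: "fun_ipow s 0 = id"
  by (simp add: fun_ipow_def)

lemma cp_mult_embed_left:
  "cp_mult s (cp_embed f) G = (\<lambda>k x. f x * G k x)"
proof (cases "f = (\<lambda>x. 0)")
  case True
  then have "supp (cp_embed f) = {}" by (auto simp: cp_embed_def)
  then show ?thesis using True by (simp add: cp_mult_def)
next
  case False
  then have "supp (cp_embed f) = {0}" by (auto simp: cp_embed_def)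
  then show ?thesis by (simp add: cp_mult_def cp_embed_def sig_tilde_pow_def)
qed

lemma cp_mult_embed_right:
  assumes "finite (supp F)"
  shows "cp_mult s F (cp_embed g) = (\<lambda>k x. F k x * g (fun_ipow s (-k) x))"
proof (intro ext)
  fix k x
  have "cp_mult s F (cp_embed g) k x =
        (\<Sum>n\<in>supp F. if n = k then F k x * g (fun_ipow s (-k) x) else 0)"
    unfolding cp_mult_def by (rule sum.cong) (auto simp: cp_embed_def sig_tilde_pow_def)
  also have "\<dots> = (if k \<in> supp F then F k x * g (fun_ipow s (-k) x) else 0)"
    using assms by (simp add: sum.delta)
  also have "\<dots> = F k x * g (fun_ipow s (-k) x)" by auto
  finally show "cp_mult s F (cp_embed g) k x = F k x * g (fun_ipow s (-k) x)" .
qed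

lemma cp_mult_nz:
  assumes "cp_mult s F G k \<noteq> (\<lambda>x. 0)"
  shows "\<exists>n\<in>supp F. G (k - n) \<noteq> (\<lambda>x. 0)"
proof (rule ccontr)
  assume "\<not> ?thesis"
  hence "cp_mult s F G k = (\<lambda>x. 0)" unfolding cp_mult_def sig_tilde_pow_def
    by (intro ext sum.neutral ballI) auto
  thus False using assms by simp
qed

lemma cp_mult_cp:
  assumes A: "fun_subalgebra A" and inv: "\<forall>f\<in>A. sig_tilde s f \<in> A \<and> f \<circ> s \<in> A"
    and F: "F \<in> crossed_product A" and G: "G \<in> crossed_product A"
  shows "cp_mult s F G \<in> crossed_product A"
proof -
  have fF: "finite (supp F)" and fG: "finite (supp G)" and FA: "\<forall>n. F n \<in> A" and GA: "\<forall>n. G n \<in> A"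
    using F G by (auto simp: crossed_product_def)
  have "supp (cp_mult s F G) \<subseteq> (\<lambda>(a, b). a + b) ` (supp F \<times> supp G)"
  proof
    fix k assume "k \<in> supp (cp_mult s F G)"
    then obtain n where "n \<in> supp F" "G (k - n) \<noteq> (\<lambda>x. 0)" using cp_mult_nz by blast
    thus "k \<in> (\<lambda>(a, b). a + b) ` (supp F \<times> supp G)"
      by (intro image_eqI[of _ _ "(n, k - n)"]) auto
  qed
  hence "finite (supp (cp_mult s F G))"
    by (rule finite_subset) (use fF fG in auto)
  moreover have "cp_mult s F G k \<in> A" for k
  proof -
    have "(\<lambda>x. F n x * sig_tilde_pow s n (G (k - n)) x) \<in> A" for n
    proof -
      have "G (k - n) \<circ> fun_ipow s (-n) \<in> A" using A_ipow[OF inv] GA by blast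
      hence m: "(\<lambda>x. F n x * (G (k - n) \<circ> fun_ipow s (-n)) x) \<in> A"
        using A FA unfolding fun_subalgebra_def by blast
      show ?thesis using m by (simp only: sig_tilde_pow_def)
    qed
    thus ?thesis unfolding cp_mult_def by (intro A_sum[OF A fF]) blast
  qed
  ultimately show ?thesis by (simp add: crossed_product_def)
qed

lemma pow_inv_cancel:
  fixes s :: "'a \<Rightarrow> 'a" and m :: nat
  assumes "bij s"
  shows "s ^^ m \<circ> inv s ^^ m = id \<and> inv s ^^ m \<circ> s ^^ m = id"
proof (induction m)
  case 0 then show ?case by simp
next
  case (Suc m)
  have "surj s" "inj s" using assms bij_is_surj bij_is_inj by auto
  hence si: "s \<circ> inv s = id" "inv s \<circ> s = id" by (simp_all only: surj_iff inj_iff)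
  have e1: "s ^^ Suc m \<circ> inv s ^^ Suc m = s ^^ m \<circ> (s \<circ> inv s) \<circ> inv s ^^ m"
    unfolding funpow_Suc_right[where f=s and n=m] funpow.simps(2)[where f="inv s" and n=m] by (simp only: o_assoc)
  have e2: "inv s ^^ Suc m \<circ> s ^^ Suc m = inv s ^^ m \<circ> (inv s \<circ> s) \<circ> s ^^ m"
    unfolding funpow_Suc_right[where f="inv s" and n=m] funpow.simps(2)[where f=s and n=m] by (simp only: o_assoc)
  show ?case using e1 e2 Suc.IH si by (simp only: comp_id simp_thms)
qed

lemma cp_mult_triv:
  assumes "\<forall>n\<in>supp F. fun_ipow s (-n) = id"
  shows "cp_mult s F G k x = (\<Sum>n\<in>supp F. F n x * G (k - n) x)"
  unfolding cp_mult_def sig_tilde_pow_def using assms by (intro sum.cong) auto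

lemma comm_sum:
  assumes fF: "finite (supp F)" and fG: "finite (supp G)"
  shows "(\<Sum>n\<in>supp F. F n x * G (k - n) x) = (\<Sum>n\<in>supp G. G n x * F (k - n) x)"
proof -
  define S where "S = supp F \<union> (\<lambda>j. k - j) ` supp G"
  have fS: "finite S" using fF fG by (simp add: S_def)
  have e1: "(\<Sum>n\<in>supp F. F n x * G (k - n) x) = (\<Sum>n\<in>S. F n x * G (k - n) x)"
  proof (rule sum.mono_neutral_left[OF fS])
    show "supp F \<subseteq> S" by (auto simp: S_def)
    show "\<forall>i\<in>S - supp F. F i x * G (k - i) x = 0" by auto
  qed
  have e2: "(\<Sum>n\<in>supp G. G n x * F (k - n) x) = (\<Sum>n\<in>(\<lambda>j. k - j) ` supp G. F n x * G (k - n) x)"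
    by (subst sum.reindex) (auto simp: inj_on_def mult.commute)
  have e3: "(\<Sum>n\<in>(\<lambda>j. k - j) ` supp G. F n x * G (k - n) x) = (\<Sum>n\<in>S. F n x * G (k - n) x)"
  proof (rule sum.mono_neutral_left[OF fS])
    show "(\<lambda>j. k - j) ` supp G \<subseteq> S" by (auto simp: S_def)
    show "\<forall>i\<in>S - (\<lambda>j. k - j) ` supp G. F i x * G (k - i) x = 0"
    proof
      fix i assume i: "i \<in> S - (\<lambda>j. k - j) ` supp G"
      have "G (k - i) = (\<lambda>x. 0)"
      proof (rule ccontr)
        assume "G (k - i) \<noteq> (\<lambda>x. 0)"
        hence "k - (k - i) \<in> (\<lambda>j. k - j) ` supp G" by blast
        thus False using i by simp
      qed
      thus "F i x * G (k - i) x = 0" by simp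
    qed
  qed
  show ?thesis by (simp only: e1 e2 e3)
qed


theorem corollary3p12:
  fixes At :: "('a::{t2_space, second_countable_topology}, 'n::finite) chart set"
    and \<sigma> :: "'a \<Rightarrow> 'a"
    and A :: "('a \<Rightarrow> complex) set"
  assumes "connected_complex_manifold At"
    and "biholomorphic At \<sigma>"
    and "fun_subalgebra A"
    and "\<forall>f\<in>A. holo_fun At f"
    and "separates_points A"
    and "\<forall>f\<in>A. sig_tilde \<sigma> f \<in> A \<and> f \<circ> \<sigma> \<in> A"
  shows "maximal_abelian \<sigma> A \<longleftrightarrow> \<not> finite_order \<sigma>"
proof -
  note cm = assms(1) and bh = assms(2) and SA = assms(3) and HA = assms(4) and sep = assms(5)
    and inv = assms(6)
  have at: "holo_atlas At" and conn: "connected (UNIV::'a set)"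
    using cm by (auto simp: connected_complex_manifold_def)
  have bij: "bij \<sigma>" and cs: "continuous_on UNIV \<sigma>" and csi: "continuous_on UNIV (inv \<sigma>)"
    using bh by (auto simp: biholomorphic_def holo_map_def)
  have cpow: "continuous_on UNIV (fun_ipow \<sigma> j)" for j
    unfolding fun_ipow_def using cont_funpow[OF cs] cont_funpow[OF csi] by simp
  obtain f0 where f0: "f0 \<in> A" "f0 \<noteq> (\<lambda>x. 0)"
  proof -
    obtain p :: 'a where True by blast
    have "p \<in> (\<Union>c\<in>At. fst c)" using at by (simp add: holo_atlas_def)
    then obtain U \<phi> where c: "(U, \<phi>) \<in> At" "p \<in> U" by auto
    have "is_chart (U, \<phi>)" using at c by (auto simp: holo_atlas_def)
    hence "open (\<phi> ` U)" by (auto simp: is_chart_def)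
    hence "\<phi> ` U \<noteq> {\<phi> p}" using not_open_singleton by metis
    then obtain q where "q \<in> U" "\<phi> q \<noteq> \<phi> p" using c by auto
    hence "q \<noteq> p" by auto
    then obtain f where "f \<in> A" "f q \<noteq> f p" using sep by (auto simp: separates_points_def)
    hence "f \<noteq> (\<lambda>x. 0)" by auto
    thus ?thesis using that \<open>f \<in> A\<close> by blast
  qed
  have comm_embed: "cp_commutative \<sigma> (cp_embed ` A)"
    unfolding cp_commutative_def
    by (clarsimp simp: cp_mult_embed_left) (auto simp: cp_embed_def fun_eq_iff)
  have embed_cp: "cp_embed f \<in> crossed_product A" if "f \<in> A" for f
  proof -
    have "supp (cp_embed f) \<subseteq> {0}" by (auto simp: cp_embed_def)
    hence "finite (supp (cp_embed f))" using finite_subset by blast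
    moreover have "(\<lambda>x. 0) \<in> A" using SA by (simp add: fun_subalgebra_def)
    ultimately show ?thesis using that by (auto simp: crossed_product_def cp_embed_def)
  qed
  show ?thesis
  proof
    assume ma: "maximal_abelian \<sigma> A"
    show "\<not> finite_order \<sigma>"
    proof
      assume "finite_order \<sigma>"
      then obtain n :: int where n: "n \<noteq> 0" "fun_ipow \<sigma> n = id" by (auto simp: finite_order_def)
      obtain m :: nat where m: "m > 0" "\<sigma> ^^ m = id"
      proof (cases "n > 0")
        case True
        then show ?thesis using n that[of "nat n"] by (simp add: fun_ipow_def)
      next
        case False
        hence "inv \<sigma> ^^ nat (-n) = id" "nat (-n) > 0" using n by (auto simp: fun_ipow_def)
        moreover have "inv \<sigma> ^^ nat (-n) \<circ> \<sigma> ^^ nat (-n) = id" using pow_inv_cancel[OF bij] by blast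
        ultimately show ?thesis using that[of "nat (-n)"] by simp
      qed
      have mi: "inv \<sigma> ^^ m = id"
        using pow_inv_cancel[OF bij, of m] m(2) by simp
      have fid: "fun_ipow \<sigma> j = id" if dv: "int m dvd j" for j
      proof -
        obtain q where q: "j = int m * q" using dv by (auto simp: dvd_def)
        show ?thesis
        proof (cases "0 \<le> j")
          case True
          hence "q \<ge> 0" using q m(1) by (simp add: zero_le_mult_iff)
          hence "nat j = m * nat q" using q by (simp add: nat_mult_distrib)
          thus ?thesis using True m(2) by (simp add: fun_ipow_def funpow_mult[symmetric])
        next
          case False
          hence "q < 0" using q m(1) by (smt (verit) mult_nonneg_nonneg of_nat_0_le_iff)
          hence "nat (-j) = m * nat (-q)" using q by (metis mult_minus_right nat_int nat_mult_distrib of_nat_0_le_iff)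
          thus ?thesis using False mi by (simp add: fun_ipow_def funpow_mult[symmetric])
        qed
      qed
      define B where "B = {F \<in> crossed_product A. \<forall>k. \<not> int m dvd k \<longrightarrow> F k = (\<lambda>x. 0)}"
      have triv: "\<forall>n\<in>supp F. fun_ipow \<sigma> (-n) = id" if "F \<in> B" for F
        using that fid by (auto simp: B_def) (metis dvd_minus_iff)
      have zA: "(\<lambda>x. 0) \<in> A" using SA by (simp add: fun_subalgebra_def)
      have sub: "cp_subalgebra \<sigma> A B"
        unfolding cp_subalgebra_def
      proof (intro conjI ballI allI)
        show "B \<subseteq> crossed_product A" by (auto simp: B_def)
        show "(\<lambda>n x. 0) \<in> B" using zA by (auto simp: B_def crossed_product_def)
      next
        fix F G assume F: "F \<in> B" and G: "G \<in> B"
        have fF: "finite (supp F)" and fG: "finite (supp G)" and FA: "\<forall>n. F n \<in> A" and GA: "\<forall>n. G n \<in> A"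
          using F G by (auto simp: B_def crossed_product_def)
        have "supp (\<lambda>n x. F n x + G n x) \<subseteq> supp F \<union> supp G" by auto
        hence "finite (supp (\<lambda>n x. F n x + G n x))" using fF fG finite_subset by blast
        moreover have "(\<lambda>x. F n x + G n x) \<in> A" for n using SA FA GA by (simp add: fun_subalgebra_def)
        ultimately show "(\<lambda>n x. F n x + G n x) \<in> B" using F G by (auto simp: B_def crossed_product_def)
        have "cp_mult \<sigma> F G \<in> crossed_product A"
          using cp_mult_cp[OF SA inv] F G by (auto simp: B_def)
        moreover have "cp_mult \<sigma> F G k = (\<lambda>x. 0)" if "\<not> int m dvd k" for k
        proof (rule ccontr)
          assume "cp_mult \<sigma> F G k \<noteq> (\<lambda>x. 0)"
          then obtain n where "n \<in> supp F" "G (k - n) \<noteq> (\<lambda>x. 0)" using cp_mult_nz by blast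
          hence "int m dvd n" "int m dvd (k - n)" using F G by (auto simp: B_def)
          hence "int m dvd k" by (metis dvd_add diff_add_cancel)
          thus False using that by simp
        qed
        ultimately show "cp_mult \<sigma> F G \<in> B" by (simp add: B_def)
      next
        fix c F assume F: "F \<in> B"
        have fF: "finite (supp F)" and FA: "\<forall>n. F n \<in> A"
          using F by (auto simp: B_def crossed_product_def)
        have "supp (\<lambda>n x. c * F n x) \<subseteq> supp F" by auto
        hence "finite (supp (\<lambda>n x. c * F n x))" using fF finite_subset by blast
        moreover have "(\<lambda>x. c * F n x) \<in> A" for n using SA FA by (simp add: fun_subalgebra_def)
        ultimately show "(\<lambda>n x. c * F n x) \<in> B" using F by (auto simp: B_def crossed_product_def)
      qed
      have comB: "cp_commutative \<sigma> B"
        unfolding cp_commutative_def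
      proof (intro ballI ext)
        fix F G k x assume F: "F \<in> B" and G: "G \<in> B"
        have fF: "finite (supp F)" and fG: "finite (supp G)"
          using F G by (auto simp: B_def crossed_product_def)
        show "cp_mult \<sigma> F G k x = cp_mult \<sigma> G F k x"
          using cp_mult_triv[OF triv[OF F]] cp_mult_triv[OF triv[OF G]] comm_sum[OF fF fG] by simp
      qed
      have incl: "cp_embed ` A \<subseteq> B"
        using embed_cp by (auto simp: B_def cp_embed_def)
      define F0 where "F0 = (\<lambda>k. if k = int m then f0 else (\<lambda>x. 0))"
      have "F0 \<in> B"
      proof -
        have "supp F0 \<subseteq> {int m}" by (auto simp: F0_def)
        hence "finite (supp F0)" using finite_subset by blast
        thus ?thesis using f0 zA by (auto simp: B_def crossed_product_def F0_def)
      qed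
      moreover have "F0 \<notin> cp_embed ` A"
      proof
        assume "F0 \<in> cp_embed ` A"
        then obtain g where "F0 = cp_embed g" by blast
        hence "F0 (int m) = cp_embed g (int m)" by simp
        thus False using f0 m(1) by (simp add: F0_def cp_embed_def)
      qed
      ultimately have "B \<noteq> cp_embed ` A" by blast
      thus False using ma sub comB incl unfolding maximal_abelian_def by blast
    qed
  next
    assume nfo: "\<not> finite_order \<sigma>"
    show "maximal_abelian \<sigma> A"
      unfolding maximal_abelian_def
    proof (intro conjI allI impI comm_embed)
      fix B assume B: "cp_subalgebra \<sigma> A B \<and> cp_commutative \<sigma> B \<and> cp_embed ` A \<subseteq> B"
      show "B = cp_embed ` A"
      proof
        show "cp_embed ` A \<subseteq> B" using B by blast
        show "B \<subseteq> cp_embed ` A"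
        proof
          fix F assume F: "F \<in> B"
          have Fcp: "F \<in> crossed_product A" using F B by (auto simp: cp_subalgebra_def)
          hence fF: "finite (supp F)" and FA: "\<forall>n. F n \<in> A" by (auto simp: crossed_product_def)
          have Fk: "F k = (\<lambda>x. 0)" if k: "k \<noteq> 0" for k
          proof -
            define V where "V = {x. fun_ipow \<sigma> (-k) x \<noteq> id x}"
            have "closed {x. fun_ipow \<sigma> (-k) x = id x}"
              by (rule closed_Collect_eq[OF cpow continuous_on_id'])
            hence "open V" unfolding V_def by (simp add: open_Collect_neg)
            have "V \<noteq> {}"
            proof
              assume "V = {}"
              hence "fun_ipow \<sigma> (-k) = id" by (auto simp: V_def fun_eq_iff)
              moreover have "-k \<noteq> 0" using k by simp
              ultimately show False using nfo unfolding finite_order_def by blast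
            qed
            have zV: "\<forall>x\<in>V. F k x = 0"
            proof
              fix x assume "x \<in> V"
              hence ne: "fun_ipow \<sigma> (-k) x \<noteq> x" by (simp add: V_def)
              then obtain g where g: "g \<in> A" "g (fun_ipow \<sigma> (-k) x) \<noteq> g x"
                using sep by (auto simp: separates_points_def)
              have "cp_embed g \<in> B" using g B by blast
              hence "cp_mult \<sigma> F (cp_embed g) = cp_mult \<sigma> (cp_embed g) F"
                using F B by (auto simp: cp_commutative_def)
              hence "cp_mult \<sigma> F (cp_embed g) k x = cp_mult \<sigma> (cp_embed g) F k x" by simp
              hence "F k x * g (fun_ipow \<sigma> (-k) x) = g x * F k x"
                by (simp only: cp_mult_embed_right[OF fF] cp_mult_embed_left)
              hence "F k x * (g (fun_ipow \<sigma> (-k) x) - g x) = 0" by (simp add: algebra_simps)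
              thus "F k x = 0" using g(2) by simp
            qed
            have "F k y = 0" for y
              by (rule ident_manifold[OF at conn HA[rule_format, OF FA[rule_format]] \<open>open V\<close> \<open>V \<noteq> {}\<close> zV])
            thus ?thesis by auto
          qed
          have "F = cp_embed (F 0)" using Fk by (auto simp: cp_embed_def fun_eq_iff)
          thus "F \<in> cp_embed ` A" using FA by blast
        qed
      qed
    qed
  qed
qed

end
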